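(* A $t$-$(v,k,\lambda)$ design has a zero-sum $2$-flow if and only if it is even.
   Context: A $t$-$(v,k,\lambda)$ design is a pair $(X,\mathcal{B})$ with $|X|=v$ and $\mathcal{B}$ a collection of $k$-subsets of $X$ such that every $t$-subset of $X$ lies in exactly $\lambda$ blocks; let $r$ be the number of blocks containing a given point. A design is $\alpha$-resolvable if $\mathcal{B}$ can be partitioned into classes ($\alpha$-parallel classes) such that each point of $X$ lies in exactly $\alpha$ blocks of each class; the number of classes is then $\rho=r/\alpha$. The design is even if it is $\alpha$-resolvable for some $\alpha$ with $\rho$ even. A zero-sum $2$-flow is a map $f:\mathcal{B}\to\{\pm1\}$ such that $\sum_{B\ni x} f(B)=0$ for every $x\in X$. *)

theory Defs
  imports "HOL-Library.Disjoint_Sets"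
begin

text \<open>A block collection is an indexed family B over a finite index set I
(so repeated blocks are allowed).  A t-(v,k,lambda) design on X.\<close>

definition t_design ::
  "nat \<Rightarrow> nat \<Rightarrow> nat \<Rightarrow> nat \<Rightarrow> 'a set \<Rightarrow> 'i set \<Rightarrow> ('i \<Rightarrow> 'a set) \<Rightarrow> bool" where
  "t_design t v k lam X I B \<longleftrightarrow>
     finite X \<and> card X = v \<and> finite I \<and> 1 \<le> t \<and> t \<le> k \<and> k \<le> v \<and>
     (\<forall>i\<in>I. B i \<subseteq> X \<and> card (B i) = k) \<and>
     (\<forall>T. T \<subseteq> X \<and> card T = t \<longrightarrow> card {i\<in>I. T \<subseteq> B i} = lam)"

definition alpha_resolution :: "nat \<Rightarrow> 'a set \<Rightarrow> 'i set \<Rightarrow> ('i \<Rightarrow> 'a set) \<Rightarrow> 'i set set \<Rightarrow> bool" where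
  "alpha_resolution \<alpha> X I B P \<longleftrightarrow>
     partition_on I P \<and> (\<forall>C\<in>P. \<forall>x\<in>X. card {i\<in>C. x \<in> B i} = \<alpha>)"

definition alpha_resolvable :: "nat \<Rightarrow> 'a set \<Rightarrow> 'i set \<Rightarrow> ('i \<Rightarrow> 'a set) \<Rightarrow> bool" where
  "alpha_resolvable \<alpha> X I B \<longleftrightarrow> (\<exists>P. alpha_resolution \<alpha> X I B P)"

text \<open>Even: alpha-resolvable for some alpha >= 1 with an even number rho of classes
(rho = r / alpha is the number of classes of the resolution).\<close>

definition even_design :: "'a set \<Rightarrow> 'i set \<Rightarrow> ('i \<Rightarrow> 'a set) \<Rightarrow> bool" where
  "even_design X I B \<longleftrightarrow>
     (\<exists>\<alpha> P. \<alpha> \<ge> 1 \<and> alpha_resolution \<alpha> X I B P \<and> even (card P))"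

definition zero_sum_2_flow :: "'a set \<Rightarrow> 'i set \<Rightarrow> ('i \<Rightarrow> 'a set) \<Rightarrow> ('i \<Rightarrow> int) \<Rightarrow> bool" where
  "zero_sum_2_flow X I B f \<longleftrightarrow>
     (\<forall>i\<in>I. f i = 1 \<or> f i = -1) \<and> (\<forall>x\<in>X. (\<Sum>i\<in>{i\<in>I. x \<in> B i}. f i) = 0)"

end

theory Submission
  imports Defs
begin

lemma card_subsets_with:
  assumes "finite A" "x \<in> A" "t \<ge> 1"
  shows "card {T. T \<subseteq> A \<and> card T = t \<and> x \<in> T} = (card A - 1) choose (t - 1)"
proof -
  have "bij_betw (\<lambda>T. T - {x}) {T. T \<subseteq> A \<and> card T = t \<and> x \<in> T}
          {S. S \<subseteq> A - {x} \<and> card S = t - 1}"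
  proof (rule bij_betw_byWitness[where f' = "insert x"])
    show "\<forall>a\<in>{T. T \<subseteq> A \<and> card T = t \<and> x \<in> T}. insert x (a - {x}) = a" by auto
    show "\<forall>a'\<in>{S. S \<subseteq> A - {x} \<and> card S = t - 1}. insert x a' - {x} = a'" by auto
    show "(\<lambda>T. T - {x}) ` {T. T \<subseteq> A \<and> card T = t \<and> x \<in> T} \<subseteq> {S. S \<subseteq> A - {x} \<and> card S = t - 1}"
      using assms by (auto simp: card_Diff_singleton intro: finite_subset)
    show "insert x ` {S. S \<subseteq> A - {x} \<and> card S = t - 1} \<subseteq> {T. T \<subseteq> A \<and> card T = t \<and> x \<in> T}"
    proof
      fix U assume "U \<in> insert x ` {S. S \<subseteq> A - {x} \<and> card S = t - 1}"
      then obtain S where U: "U = insert x S" and S: "S \<subseteq> A - {x}" "card S = t - 1" by auto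
      then have "finite S" using assms finite_subset by blast
      moreover have "x \<notin> S" using S by auto
      ultimately have "card (insert x S) = Suc (t - 1)" using S by simp
      then show "U \<in> {T. T \<subseteq> A \<and> card T = t \<and> x \<in> T}" using U S assms by auto
    qed
  qed
  then have "card {T. T \<subseteq> A \<and> card T = t \<and> x \<in> T} = card {S. S \<subseteq> A - {x} \<and> card S = t - 1}"
    by (rule bij_betw_same_card)
  also have "\<dots> = card (A - {x}) choose (t - 1)" using assms by (simp add: n_subsets)
  finally show ?thesis using assms by simp
qed

lemma rep_count:
  assumes d: "t_design t v k lam X I B" and x: "x \<in> X"
  shows "card {i\<in>I. x \<in> B i} * ((k - 1) choose (t - 1)) = ((v - 1) choose (t - 1)) * lam"
proof -
  from d have fX: "finite X" and cX: "card X = v" and fI: "finite I" and t1: "1 \<le> t"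
    and tk: "t \<le> k" and BI: "\<And>i. i \<in> I \<Longrightarrow> B i \<subseteq> X \<and> card (B i) = k"
    and des: "\<And>T. T \<subseteq> X \<Longrightarrow> card T = t \<Longrightarrow> card {i\<in>I. T \<subseteq> B i} = lam"
    unfolding t_design_def by auto
  define S where "S = {T. T \<subseteq> X \<and> card T = t \<and> x \<in> T}"
  have "S \<subseteq> Pow X" unfolding S_def by auto
  then have fS: "finite S" using fX by (meson finite_Pow_iff finite_subset)
  have "(\<Sum>T\<in>S. \<Sum>i\<in>I. (if T \<subseteq> B i then 1 else 0::nat)) = (\<Sum>i\<in>I. \<Sum>T\<in>S. (if T \<subseteq> B i then 1 else 0::nat))"
    by (rule sum.swap)
  moreover have "(\<Sum>T\<in>S. \<Sum>i\<in>I. (if T \<subseteq> B i then 1 else 0::nat)) = ((v - 1) choose (t - 1)) * lam"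
  proof -
    have "(\<Sum>T\<in>S. \<Sum>i\<in>I. (if T \<subseteq> B i then 1 else 0::nat)) = (\<Sum>T\<in>S. lam)"
    proof (rule sum.cong[OF refl])
      fix T assume "T \<in> S"
      then have "card {i\<in>I. T \<subseteq> B i} = lam" using des unfolding S_def by auto
      moreover have "card {i\<in>I. T \<subseteq> B i} = (\<Sum>i\<in>I. (if T \<subseteq> B i then 1 else 0::nat))"
        using fI by (simp add: sum.inter_filter[symmetric])
      ultimately show "(\<Sum>i\<in>I. (if T \<subseteq> B i then 1 else 0::nat)) = lam" by simp
    qed
    also have "\<dots> = card S * lam" by simp
    also have "card S = (v - 1) choose (t - 1)"
      unfolding S_def using card_subsets_with[OF fX x t1] cX by simp
    finally show ?thesis .
  qed
  moreover have "(\<Sum>i\<in>I. \<Sum>T\<in>S. (if T \<subseteq> B i then 1 else 0::nat)) = card {i\<in>I. x \<in> B i} * ((k - 1) choose (t - 1))"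
  proof -
    have "(\<Sum>i\<in>I. \<Sum>T\<in>S. (if T \<subseteq> B i then 1 else 0::nat))
        = (\<Sum>i\<in>I. if x \<in> B i then ((k - 1) choose (t - 1)) else 0)"
    proof (rule sum.cong[OF refl])
      fix i assume i: "i \<in> I"
      have "(\<Sum>T\<in>S. (if T \<subseteq> B i then 1 else 0::nat)) = card {T\<in>S. T \<subseteq> B i}"
        using fS by (simp add: sum.inter_filter[symmetric])
      also have "{T\<in>S. T \<subseteq> B i} = {T. T \<subseteq> B i \<and> card T = t \<and> x \<in> T}"
        unfolding S_def using BI[OF i] by auto
      finally have eq: "(\<Sum>T\<in>S. (if T \<subseteq> B i then 1 else 0::nat)) = card {T. T \<subseteq> B i \<and> card T = t \<and> x \<in> T}" .
      show "(\<Sum>T\<in>S. (if T \<subseteq> B i then 1 else 0::nat)) = (if x \<in> B i then ((k - 1) choose (t - 1)) else 0)"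
      proof (cases "x \<in> B i")
        case True
        have "finite (B i)" using BI[OF i] fX finite_subset by blast
        then show ?thesis using eq card_subsets_with[OF _ True t1] BI[OF i] True by simp
      next
        case False
        then have e: "{T. T \<subseteq> B i \<and> card T = t \<and> x \<in> T} = {}" by auto
        show ?thesis unfolding eq e using False by simp
      qed
    qed
    also have "\<dots> = card {i\<in>I. x \<in> B i} * ((k - 1) choose (t - 1))"
      using fI by (simp add: sum.inter_filter[symmetric])
    finally show ?thesis .
  qed
  ultimately show ?thesis by simp
qed

lemma rep_const:
  assumes d: "t_design t v k lam X I B" and x: "x \<in> X" and y: "y \<in> X"
  shows "card {i\<in>I. x \<in> B i} = card {i\<in>I. y \<in> B i}"
proof -
  have ne: "(k - 1) choose (t - 1) \<noteq> 0" using d unfolding t_design_def by auto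
  have eq: "card {i\<in>I. x \<in> B i} * ((k - 1) choose (t - 1)) = card {i\<in>I. y \<in> B i} * ((k - 1) choose (t - 1))"
    using rep_count[OF d x] rep_count[OF d y] by (rule trans[OF _ sym])
  show ?thesis by (rule iffD1[OF mult_right_cancel[OF ne] eq])
qed

lemma flow_split:
  assumes fI: "finite I" and f: "\<forall>i\<in>I. f i = 1 \<or> f i = -1"
    and z: "(\<Sum>i\<in>{i\<in>I. x \<in> B i}. f i) = (0::int)"
  shows "card {i\<in>{i\<in>I. f i = 1}. x \<in> B i} = card {i\<in>{i\<in>I. f i = -1}. x \<in> B i}
    \<and> card {i\<in>I. x \<in> B i} = card {i\<in>{i\<in>I. f i = 1}. x \<in> B i} + card {i\<in>{i\<in>I. f i = -1}. x \<in> B i}"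
proof -
  let ?P = "{i\<in>{i\<in>I. f i = 1}. x \<in> B i}" and ?M = "{i\<in>{i\<in>I. f i = -1}. x \<in> B i}"
  have un: "{i\<in>I. x \<in> B i} = ?P \<union> ?M" using f by auto
  have dj: "?P \<inter> ?M = {}" by auto
  have fP: "finite ?P" "finite ?M" using fI by auto
  have "(\<Sum>i\<in>{i\<in>I. x \<in> B i}. f i) = (\<Sum>i\<in>?P. f i) + (\<Sum>i\<in>?M. f i)"
    unfolding un by (rule sum.union_disjoint[OF fP dj])
  also have "(\<Sum>i\<in>?P. f i) = (\<Sum>i\<in>?P. 1)" by (rule sum.cong) auto
  also have "(\<Sum>i\<in>?M. f i) = (\<Sum>i\<in>?M. -1)" by (rule sum.cong) auto
  finally have "int (card ?P) - int (card ?M) = 0" using z by simp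
  moreover have "card {i\<in>I. x \<in> B i} = card ?P + card ?M"
    unfolding un by (rule card_Un_disjoint[OF fP dj])
  ultimately show ?thesis by simp
qed

lemma flow_to_even:
  assumes d: "t_design t v k lam X I B" and fl: "zero_sum_2_flow X I B f"
  shows "even_design X I B"
proof (cases "I = {}")
  case True
  have "alpha_resolution 1 X I B {}" unfolding alpha_resolution_def partition_on_def True by simp
  then show ?thesis unfolding even_design_def by fastforce
next
  case False
  from d have fX: "finite X" and fI: "finite I" and t1: "1 \<le> t"
    and tk: "t \<le> k" and BI: "\<And>i. i \<in> I \<Longrightarrow> B i \<subseteq> X \<and> card (B i) = k"
    unfolding t_design_def by auto
  from fl have f: "\<forall>i\<in>I. f i = 1 \<or> f i = -1"
    and z: "\<And>x. x \<in> X \<Longrightarrow> (\<Sum>i\<in>{i\<in>I. x \<in> B i}. f i) = 0"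
    unfolding zero_sum_2_flow_def by auto
  obtain i0 where i0: "i0 \<in> I" using False by auto
  have "card (B i0) \<ge> 1" using BI[OF i0] t1 tk by simp
  then obtain x0 where x0: "x0 \<in> B i0" by (metis card.empty ex_in_conv not_one_le_zero)
  have x0X: "x0 \<in> X" using x0 BI[OF i0] by auto
  define Ip where "Ip = {i\<in>I. f i = 1}"
  define Im where "Im = {i\<in>I. f i = -1}"
  define \<alpha> where "\<alpha> = card {i\<in>Ip. x0 \<in> B i}"
  have sp: "\<And>x. x \<in> X \<Longrightarrow> card {i\<in>Ip. x \<in> B i} = card {i\<in>Im. x \<in> B i}
    \<and> card {i\<in>I. x \<in> B i} = card {i\<in>Ip. x \<in> B i} + card {i\<in>Im. x \<in> B i}"
    unfolding Ip_def Im_def using flow_split[OF fI f z] by blast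
  have cP: "\<And>x. x \<in> X \<Longrightarrow> card {i\<in>Ip. x \<in> B i} = \<alpha>"
  proof -
    fix x assume x: "x \<in> X"
    have "card {i\<in>I. x \<in> B i} = card {i\<in>I. x0 \<in> B i}" by (rule rep_const[OF d x x0X])
    then show "card {i\<in>Ip. x \<in> B i} = \<alpha>" using sp[OF x] sp[OF x0X] unfolding \<alpha>_def by simp
  qed
  have cM: "\<And>x. x \<in> X \<Longrightarrow> card {i\<in>Im. x \<in> B i} = \<alpha>" using sp cP by metis
  have "card {i\<in>I. x0 \<in> B i} \<ge> 1"
  proof -
    have "i0 \<in> {i\<in>I. x0 \<in> B i}" using i0 x0 by auto
    moreover have "finite {i\<in>I. x0 \<in> B i}" using fI by auto
    ultimately show ?thesis by (metis One_nat_def Suc_leI card_gt_0_iff empty_iff)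
  qed
  then have a1: "\<alpha> \<ge> 1" using sp[OF x0X] cP[OF x0X] cM[OF x0X] by simp
  have neP: "Ip \<noteq> {}"
  proof
    assume "Ip = {}" then have "\<alpha> = 0" using cP[OF x0X] by simp
    then show False using a1 by simp
  qed
  have neM: "Im \<noteq> {}"
  proof
    assume "Im = {}" then have "\<alpha> = 0" using cM[OF x0X] by simp
    then show False using a1 by simp
  qed
  have dj: "Ip \<inter> Im = {}" unfolding Ip_def Im_def by auto
  have neq: "Ip \<noteq> Im" using dj neP by auto
  have part: "partition_on I {Ip, Im}"
  proof (rule partition_onI)
    show "\<Union>{Ip, Im} = I" using f unfolding Ip_def Im_def by auto
    show "\<And>p q. p \<in> {Ip, Im} \<Longrightarrow> q \<in> {Ip, Im} \<Longrightarrow> p \<noteq> q \<Longrightarrow> disjnt p q"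
      using dj by (auto simp: disjnt_def)
    show "{} \<notin> {Ip, Im}" using neP neM by auto
  qed
  have "alpha_resolution \<alpha> X I B {Ip, Im}"
    unfolding alpha_resolution_def using part cP cM by auto
  moreover have "card {Ip, Im} = 2" using neq by simp
  ultimately show ?thesis unfolding even_design_def using a1 by fastforce
qed

lemma even_to_flow:
  assumes d: "t_design t v k lam X I B" and ev: "even_design X I B"
  shows "\<exists>f. zero_sum_2_flow X I B f"
proof -
  from d have fI: "finite I" unfolding t_design_def by auto
  from ev obtain \<alpha> P where part: "partition_on I P"
    and cnt: "\<And>C x. C \<in> P \<Longrightarrow> x \<in> X \<Longrightarrow> card {i\<in>C. x \<in> B i} = \<alpha>"
    and evP: "even (card P)"
    unfolding even_design_def alpha_resolution_def by auto
  have UP: "\<Union>P = I" using part by (simp add: partition_on_def)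
  have djP: "\<And>C C'. C \<in> P \<Longrightarrow> C' \<in> P \<Longrightarrow> C \<noteq> C' \<Longrightarrow> C \<inter> C' = {}"
    using part unfolding partition_on_def disjoint_def by blast
  have "P \<subseteq> Pow I" using UP by auto
  then have fP: "finite P" using fI by (meson finite_Pow_iff finite_subset)
  have fC: "\<And>C. C \<in> P \<Longrightarrow> finite C" using UP fI by (meson Sup_upper finite_subset)
  obtain Q where QP: "Q \<subseteq> P" and cQ: "card Q = card P div 2"
    using obtain_subset_with_card_n[of "card P div 2" P] by auto
  have fQ: "finite Q" using QP fP finite_subset by blast
  have cPQ: "card (P - Q) = card Q" using card_Diff_subset[OF fQ QP] cQ evP by auto
  define f where "f i = (if i \<in> \<Union>Q then 1 else (-1::int))" for i
  have fval: "\<And>C i. C \<in> P \<Longrightarrow> i \<in> C \<Longrightarrow> f i = (if C \<in> Q then 1 else -1)"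
  proof -
    fix C i assume C: "C \<in> P" and i: "i \<in> C"
    have "i \<in> \<Union>Q \<longleftrightarrow> C \<in> Q"
    proof
      assume "i \<in> \<Union>Q"
      then obtain C' where "C' \<in> Q" "i \<in> C'" by auto
      then have "C' = C" using djP[OF _ C, of C'] QP C i by blast
      then show "C \<in> Q" using \<open>C' \<in> Q\<close> by simp
    qed (use i in auto)
    then show "f i = (if C \<in> Q then 1 else -1)" unfolding f_def by simp
  qed
  have "zero_sum_2_flow X I B f"
    unfolding zero_sum_2_flow_def
  proof (intro conjI ballI)
    fix i show "f i = 1 \<or> f i = -1" unfolding f_def by simp
  next
    fix x assume x: "x \<in> X"
    let ?g = "\<lambda>i. if x \<in> B i then f i else 0"
    have "(\<Sum>i\<in>{i\<in>I. x \<in> B i}. f i) = (\<Sum>i\<in>I. ?g i)"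
      using fI by (rule sum.inter_filter)
    also have "\<dots> = (\<Sum>i\<in>\<Union>P. ?g i)" using UP by simp
    also have "\<dots> = (\<Sum>C\<in>P. \<Sum>i\<in>C. ?g i)"
      using sum.Union_disjoint[of P ?g] fC djP by auto
    also have "\<dots> = (\<Sum>C\<in>P. if C \<in> Q then int \<alpha> else - int \<alpha>)"
    proof (rule sum.cong[OF refl])
      fix C assume C: "C \<in> P"
      have "(\<Sum>i\<in>C. ?g i) = (\<Sum>i\<in>{i\<in>C. x \<in> B i}. f i)"
        using fC[OF C] by (rule sum.inter_filter[symmetric])
      also have "\<dots> = (\<Sum>i\<in>{i\<in>C. x \<in> B i}. (if C \<in> Q then 1 else -1))"
        by (rule sum.cong) (use fval[OF C] in auto)
      also have "\<dots> = (if C \<in> Q then int \<alpha> else - int \<alpha>)"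
        using cnt[OF C x] by simp
      finally show "(\<Sum>i\<in>C. ?g i) = (if C \<in> Q then int \<alpha> else - int \<alpha>)" .
    qed
    also have "\<dots> = (\<Sum>C\<in>P \<inter> Q. int \<alpha>) + (\<Sum>C\<in>P - Q. - int \<alpha>)"
      using fP by (simp add: sum.If_cases Diff_eq)
    also have "\<dots> = 0" using cPQ QP by (simp add: Int_absorb1)
    finally show "(\<Sum>i\<in>{i\<in>I. x \<in> B i}. f i) = 0" .
  qed
  then show ?thesis by blast
qed

theorem mainTheorem11:
  fixes X :: "'a set" and I :: "'i set" and B :: "'i \<Rightarrow> 'a set"
    and t v k lam :: nat
  assumes "t_design t v k lam X I B"
  shows "(\<exists>f. zero_sum_2_flow X I B f) \<longleftrightarrow> even_design X I B"
  using flow_to_even[OF assms] even_to_flow[OF assms] by blast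

end
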